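(* Let $A=D[X,Y;\sigma,a]$ be a generalized Weyl algebra of rank $n$, where $D$ is a $K$-algebra, and let $\Delta=\{\mathrm{ad}_{X_1},\dots,\mathrm{ad}_{X_n}\}$ and $\Delta'=\{\mathrm{ad}_{Y_1},\dots,\mathrm{ad}_{Y_n}\}$. Then: (1) $A$ is a $\Delta$-locally nilpotent algebra if and only if the maps $\sigma_1-1,\dots,\sigma_n-1$ are locally nilpotent maps on $D$. (2) $A$ is a $\Delta'$-locally nilpotent algebra if and only if the maps $\sigma_1^{-1}-1,\dots,\sigma_n^{-1}-1$ are locally nilpotent maps on $D$.
   Context: Let $\sigma=(\sigma_1,\dots,\sigma_n)$ be commuting automorphisms of $D$ and $a=(a_1,\dots,a_n)$ elements of the centre of $D$ with $\sigma_i(a_j)=a_j$ for $i\ne j$. The generalized Weyl algebra $D[X,Y;\sigma,a]$ is the ring generated by $D$ and $X_1,\dots,X_n,Y_1,\dots,Y_n$ subject to $Y_iX_i=a_i$, $X_iY_i=\sigma_i(a_i)$, $X_id=\sigma_i(d)X_i$, $Y_id=\sigma_i^{-1}(d)Y_i$ ($d\in D$), and $[X_i,X_j]=[X_i,Y_j]=[Y_i,Y_j]=0$ for $i\ne j$. $\mathrm{ad}_x(f)=xf-fx$. For $i\ge1$, $\Delta^i=\{\delta_1\cdots\delta_i\mid\delta_j\in\Delta\}$; $A$ is $\Delta$-locally nilpotent if every $f\in A$ satisfies $\Delta^{i}f=0$ for some $i\ge1$. A map $g$ is locally nilpotent on $D$ if for every $d\in D$ there is $m$ with $g^m(d)=0$.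 *)

theory Defs
  imports Main
begin

text \<open>Generalized Weyl algebras, described inside an ambient ring type 'a:
  the whole type 'a plays the role of A, D is a subring of A.\<close>

definition ad :: "'a::ring \<Rightarrow> 'a \<Rightarrow> 'a" where
  "ad x f = x * f - f * x"

definition subring_of :: "'a::ring_1 set \<Rightarrow> bool" where
  "subring_of D \<longleftrightarrow> 0 \<in> D \<and> 1 \<in> D \<and>
     (\<forall>x\<in>D. \<forall>y\<in>D. x + y \<in> D \<and> x - y \<in> D \<and> x * y \<in> D)"

definition ring_automorphism_on :: "'a::ring_1 set \<Rightarrow> ('a \<Rightarrow> 'a) \<Rightarrow> bool" where
  "ring_automorphism_on D s \<longleftrightarrow> bij_betw s D D \<and> s 1 = 1 \<and>
     (\<forall>x\<in>D. \<forall>y\<in>D. s (x + y) = s x + s y \<and> s (x * y) = s x * s y)"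

inductive_set gen_ring :: "'a::ring_1 set \<Rightarrow> 'a set" for S where
  base: "x \<in> S \<Longrightarrow> x \<in> gen_ring S"
| one: "1 \<in> gen_ring S"
| add: "x \<in> gen_ring S \<Longrightarrow> y \<in> gen_ring S \<Longrightarrow> x + y \<in> gen_ring S"
| neg: "x \<in> gen_ring S \<Longrightarrow> - x \<in> gen_ring S"
| mult: "x \<in> gen_ring S \<Longrightarrow> y \<in> gen_ring S \<Longrightarrow> x * y \<in> gen_ring S"

text \<open>Standard monomials v_alpha, alpha in Z^n (indices 1..n; alpha i = 0 outside).\<close>
definition gwa_mono1 :: "'a::ring_1 \<Rightarrow> 'a \<Rightarrow> int \<Rightarrow> 'a" where
  "gwa_mono1 x y k = (if k \<ge> 0 then x ^ nat k else y ^ nat (- k))"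

definition gwa_mono :: "nat \<Rightarrow> (nat \<Rightarrow> 'a::ring_1) \<Rightarrow> (nat \<Rightarrow> 'a) \<Rightarrow> (nat \<Rightarrow> int) \<Rightarrow> 'a" where
  "gwa_mono n X Y \<alpha> = prod_list (map (\<lambda>i. gwa_mono1 (X i) (Y i) (\<alpha> i)) [1..<n+1])"

definition gwa_index :: "nat \<Rightarrow> (nat \<Rightarrow> int) set" where
  "gwa_index n = {\<alpha>. \<forall>i. i \<notin> {1..n} \<longrightarrow> \<alpha> i = 0}"

text \<open>The ambient ring (all of 'a) is the generalized Weyl algebra D[X,Y;sigma,a]
  of rank n: it is generated by D and the X_i, Y_i subject to the defining relations,
  and no further relations hold, i.e. the standard monomials v_alpha are left
  D-linearly independent (so A is the free left D-module on them).\<close>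
definition is_GWA :: "nat \<Rightarrow> 'a::ring_1 set \<Rightarrow> (nat \<Rightarrow> 'a \<Rightarrow> 'a) \<Rightarrow> (nat \<Rightarrow> 'a)
    \<Rightarrow> (nat \<Rightarrow> 'a) \<Rightarrow> (nat \<Rightarrow> 'a) \<Rightarrow> bool" where
  "is_GWA n D \<sigma> a X Y \<longleftrightarrow>
     subring_of D \<and>
     (\<forall>i\<in>{1..n}. ring_automorphism_on D (\<sigma> i)) \<and>
     (\<forall>i\<in>{1..n}. \<forall>j\<in>{1..n}. \<forall>d\<in>D. \<sigma> i (\<sigma> j d) = \<sigma> j (\<sigma> i d)) \<and>
     (\<forall>i\<in>{1..n}. a i \<in> D \<and> (\<forall>d\<in>D. a i * d = d * a i)) \<and>
     (\<forall>i\<in>{1..n}. \<forall>j\<in>{1..n}. i \<noteq> j \<longrightarrow> \<sigma> i (a j) = a j) \<and>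
     (\<forall>i\<in>{1..n}. Y i * X i = a i \<and> X i * Y i = \<sigma> i (a i)) \<and>
     (\<forall>i\<in>{1..n}. \<forall>d\<in>D. X i * d = \<sigma> i d * X i \<and> Y i * d = inv_into D (\<sigma> i) d * Y i) \<and>
     (\<forall>i\<in>{1..n}. \<forall>j\<in>{1..n}. i \<noteq> j \<longrightarrow>
        X i * X j = X j * X i \<and> X i * Y j = Y j * X i \<and> Y i * Y j = Y j * Y i) \<and>
     gen_ring (D \<union> X ` {1..n} \<union> Y ` {1..n}) = UNIV \<and>
     (\<forall>S c. finite S \<longrightarrow> S \<subseteq> gwa_index n \<longrightarrow> (\<forall>\<alpha>\<in>S. c \<alpha> \<in> D) \<longrightarrow>
        (\<Sum>\<alpha>\<in>S. c \<alpha> * gwa_mono n X Y \<alpha>) = 0 \<longrightarrow> (\<forall>\<alpha>\<in>S. c \<alpha> = 0))"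

text \<open>Delta^i = {delta_1 ... delta_i | delta_j in Delta}; the ring (all of 'a) is
  Delta-locally nilpotent if every f has some i >= 1 with Delta^i f = 0.\<close>
definition Delta_locally_nilpotent :: "('a::ring_1 \<Rightarrow> 'a) set \<Rightarrow> bool" where
  "Delta_locally_nilpotent \<Delta> \<longleftrightarrow>
     (\<forall>f. \<exists>m\<ge>1. \<forall>ds. length ds = m \<longrightarrow> set ds \<subseteq> \<Delta> \<longrightarrow> foldr (\<circ>) ds id f = 0)"

definition locally_nilpotent_on :: "'a::ring_1 set \<Rightarrow> ('a \<Rightarrow> 'a) \<Rightarrow> bool" where
  "locally_nilpotent_on D g \<longleftrightarrow> (\<forall>d\<in>D. \<exists>m. (g ^^ m) d = 0)"

end

theory Submission
  imports Defs
begin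


fun wapp :: "('b \<Rightarrow> 'b) list \<Rightarrow> 'b \<Rightarrow> 'b" where
  "wapp [] x = x"
| "wapp (f # fs) x = f (wapp fs x)"

lemma foldr_wapp: "foldr (\<circ>) ds id = wapp ds"
  by (induction ds) auto

lemma wapp_append: "wapp (a @ b) x = wapp a (wapp b x)"
  by (induction a) auto

definition isder :: "('a::ring_1 \<Rightarrow> 'a) set \<Rightarrow> bool" where
  "isder \<Delta> \<longleftrightarrow> (\<forall>\<delta>\<in>\<Delta>. \<forall>x y. \<delta> (x + y) = \<delta> x + \<delta> y \<and> \<delta> (x * y) = \<delta> x * y + x * \<delta> y)"

lemma isder_zero: "isder \<Delta> \<Longrightarrow> \<delta> \<in> \<Delta> \<Longrightarrow> \<delta> 0 = 0"
  unfolding isder_def by (metis add_cancel_right_right)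

lemma isder_neg: "isder \<Delta> \<Longrightarrow> \<delta> \<in> \<Delta> \<Longrightarrow> \<delta> (- x) = - \<delta> x"
proof -
  assume a: "isder \<Delta>" "\<delta> \<in> \<Delta>"
  have "\<delta> (- x) + \<delta> x = \<delta> (- x + x)" using a unfolding isder_def by metis
  also have "\<dots> = 0" using isder_zero[OF a] by simp
  finally show ?thesis by (simp add: eq_neg_iff_add_eq_0)
qed

lemma isder_one: "isder \<Delta> \<Longrightarrow> \<delta> \<in> \<Delta> \<Longrightarrow> \<delta> 1 = 0"
  unfolding isder_def by (metis add_cancel_right_right mult_1_left mult_1_right)

lemma wapp_zero: "isder \<Delta> \<Longrightarrow> set ds \<subseteq> \<Delta> \<Longrightarrow> wapp ds 0 = 0"
  by (induction ds) (auto simp: isder_zero)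

lemma wapp_add: "isder \<Delta> \<Longrightarrow> set ds \<subseteq> \<Delta> \<Longrightarrow> wapp ds (x + y) = wapp ds x + wapp ds y"
  by (induction ds) (auto simp: isder_def)

lemma wapp_neg: "isder \<Delta> \<Longrightarrow> set ds \<subseteq> \<Delta> \<Longrightarrow> wapp ds (- x) = - wapp ds x"
  by (induction ds) (auto simp: isder_neg)

definition NN :: "('a::ring_1 \<Rightarrow> 'a) set \<Rightarrow> nat \<Rightarrow> 'a set" where
  "NN \<Delta> m = {f. \<forall>ds. length ds = m \<longrightarrow> set ds \<subseteq> \<Delta> \<longrightarrow> wapp ds f = 0}"

lemma NN_mono: assumes "isder \<Delta>" "f \<in> NN \<Delta> m" "m \<le> m'" shows "f \<in> NN \<Delta> m'"
  unfolding NN_def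
proof (intro CollectI allI impI)
  fix ds :: "('a \<Rightarrow> 'a) list" assume l: "length ds = m'" and s: "set ds \<subseteq> \<Delta>"
  have e: "ds = take (m' - m) ds @ drop (m' - m) ds" by simp
  have "length (drop (m' - m) ds) = m" using l assms(3) by simp
  moreover have "set (drop (m' - m) ds) \<subseteq> \<Delta>" using s by (meson order_trans set_drop_subset)
  ultimately have "wapp (drop (m' - m) ds) f = 0" using assms(2) unfolding NN_def by blast
  moreover have "set (take (m' - m) ds) \<subseteq> \<Delta>" using s by (meson order_trans set_take_subset)
  ultimately show "wapp ds f = 0" using e wapp_append wapp_zero[OF assms(1)] by metis
qed

lemma NN_add: "isder \<Delta> \<Longrightarrow> f \<in> NN \<Delta> m \<Longrightarrow> g \<in> NN \<Delta> m \<Longrightarrow> f + g \<in> NN \<Delta> m"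
  unfolding NN_def by (auto simp: wapp_add)

lemma NN_neg: "isder \<Delta> \<Longrightarrow> f \<in> NN \<Delta> m \<Longrightarrow> - f \<in> NN \<Delta> m"
  unfolding NN_def by (auto simp: wapp_neg)

lemma NN_0: "isder \<Delta> \<Longrightarrow> 0 \<in> NN \<Delta> m"
  unfolding NN_def by (auto simp: wapp_zero)

lemma NN_step: assumes "\<forall>\<delta>\<in>\<Delta>. \<delta> f \<in> NN \<Delta> m" shows "f \<in> NN \<Delta> (Suc m)"
  unfolding NN_def
proof (intro CollectI allI impI)
  fix ds :: "('a \<Rightarrow> 'a) list" assume l: "length ds = Suc m" and s: "set ds \<subseteq> \<Delta>"
  obtain ds' \<delta> where e: "ds = ds' @ [\<delta>]" using l by (cases ds rule: rev_cases) auto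
  have "\<delta> \<in> \<Delta>" "set ds' \<subseteq> \<Delta>" "length ds' = m" using s l e by auto
  then have "wapp ds' (\<delta> f) = 0" using assms unfolding NN_def by blast
  then show "wapp ds f = 0" using e by (simp add: wapp_append)
qed

lemma NN_back: assumes "f \<in> NN \<Delta> (Suc m)" "\<delta> \<in> \<Delta>" shows "\<delta> f \<in> NN \<Delta> m"
  unfolding NN_def
proof (intro CollectI allI impI)
  fix ds :: "('a \<Rightarrow> 'a) list" assume l: "length ds = m" and s: "set ds \<subseteq> \<Delta>"
  have "wapp (ds @ [\<delta>]) f = 0" using assms l s unfolding NN_def by auto
  then show "wapp ds (\<delta> f) = 0" by (simp add: wapp_append)
qed

lemma NN_mult: assumes "isder \<Delta>"
  shows "f \<in> NN \<Delta> p \<Longrightarrow> g \<in> NN \<Delta> q \<Longrightarrow> f * g \<in> NN \<Delta> (p + q)"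
proof (induction "p + q" arbitrary: p q f g)
  case 0
  then have "f = 0" unfolding NN_def by auto
  then show ?case using NN_0[OF assms] by simp
next
  case (Suc k)
  show ?case
  proof (cases "p = 0 \<or> q = 0")
    case True
    then have "f = 0 \<or> g = 0" using Suc.prems unfolding NN_def by auto
    then show ?thesis using NN_0[OF assms] by auto
  next
    case False
    then obtain p' q' where p: "p = Suc p'" and q: "q = Suc q'" by (metis not0_implies_Suc)
    have "\<forall>\<delta>\<in>\<Delta>. \<delta> (f * g) \<in> NN \<Delta> k"
    proof
      fix \<delta> assume d: "\<delta> \<in> \<Delta>"
      have "\<delta> (f * g) = \<delta> f * g + f * \<delta> g" using assms d unfolding isder_def by blast
      moreover have "\<delta> f * g \<in> NN \<Delta> k"
        using Suc(1)[of p' q "\<delta> f" g] Suc(2) Suc.prems NN_back d p by auto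
      moreover have "f * \<delta> g \<in> NN \<Delta> k"
        using Suc(1)[of p q' f "\<delta> g"] Suc(2) Suc.prems NN_back d q by auto
      ultimately show "\<delta> (f * g) \<in> NN \<Delta> k" using NN_add[OF assms] by auto
    qed
    then show ?thesis using NN_step Suc(2) by metis
  qed
qed

lemma gen_ring_NN: assumes "isder \<Delta>" "\<forall>s\<in>S. \<exists>m. s \<in> NN \<Delta> m"
  shows "x \<in> gen_ring S \<Longrightarrow> \<exists>m. x \<in> NN \<Delta> m"
proof (induction rule: gen_ring.induct)
  case (base x) then show ?case using assms by auto
next
  case one
  have "1 \<in> NN \<Delta> (Suc 0)" by (rule NN_step) (auto simp: isder_one[OF assms(1)] NN_0[OF assms(1)])
  then show ?case by blast
next
  case (add x y)
  then obtain m1 m2 where "x \<in> NN \<Delta> m1" "y \<in> NN \<Delta> m2" by blast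
  then have "x \<in> NN \<Delta> (m1+m2)" "y \<in> NN \<Delta> (m1+m2)" using NN_mono[OF assms(1)] by auto
  then show ?case using NN_add[OF assms(1)] by blast
next
  case (neg x) then show ?case using NN_neg[OF assms(1)] by blast
next
  case (mult x y) then show ?case using NN_mult[OF assms(1)] by blast
qed

lemma DLN_iff: assumes "isder \<Delta>"
  shows "Delta_locally_nilpotent \<Delta> \<longleftrightarrow> (\<forall>f. \<exists>m. f \<in> NN \<Delta> m)"
proof
  assume "Delta_locally_nilpotent \<Delta>" then show "\<forall>f. \<exists>m. f \<in> NN \<Delta> m"
    unfolding Delta_locally_nilpotent_def NN_def foldr_wapp by blast
next
  assume a: "\<forall>f. \<exists>m. f \<in> NN \<Delta> m"
  show "Delta_locally_nilpotent \<Delta>" unfolding Delta_locally_nilpotent_def foldr_wapp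
  proof
    fix f obtain m where "f \<in> NN \<Delta> m" using a by blast
    then have "f \<in> NN \<Delta> (Suc m)" using NN_mono[OF assms] by auto
    then show "\<exists>m\<ge>1. \<forall>ds. length ds = m \<longrightarrow> set ds \<subseteq> \<Delta> \<longrightarrow> wapp ds f = 0"
      unfolding NN_def by (intro exI[of _ "Suc m"]) auto
  qed
qed



lemma wapp_inv: "\<forall>i\<in>I. \<forall>x\<in>D. t i x \<in> D \<Longrightarrow> set is \<subseteq> I \<Longrightarrow> x \<in> D \<Longrightarrow> wapp (map t is) x \<in> D"
  by (induction "is") auto

lemma wapp_zero2: "\<forall>i\<in>I. t i 0 = 0 \<Longrightarrow> set is \<subseteq> I \<Longrightarrow> wapp (map t is) 0 = 0"
  by (induction "is") auto

lemma funpow_inv: "\<forall>x\<in>D. f x \<in> D \<Longrightarrow> x \<in> D \<Longrightarrow> (f ^^ j) x \<in> D"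
  by (induction j) auto

lemma funpow_zero: "(f::'a::zero \<Rightarrow> 'a) 0 = 0 \<Longrightarrow> (f ^^ j) 0 = 0"
  by (induction j) auto

lemma wapp_comm:
  assumes inv: "\<forall>i\<in>I. \<forall>x\<in>D. t i x \<in> D"
  and comm: "\<forall>j\<in>I. \<forall>x\<in>D. s (t j x) = t j (s x)"
  shows "set is \<subseteq> I \<Longrightarrow> x \<in> D \<Longrightarrow> s (wapp (map t is) x) = wapp (map t is) (s x)"
proof (induction "is")
  case Nil then show ?case by simp
next
  case (Cons i "is")
  have "wapp (map t is) x \<in> D" using wapp_inv[OF inv] Cons.prems by auto
  then show ?case using Cons comm by auto
qed

lemma wapp_rearr:
  assumes inv: "\<forall>i\<in>insert k I. \<forall>x\<in>D. t i x \<in> D"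
  and comm: "\<forall>j\<in>I. \<forall>x\<in>D. t k (t j x) = t j (t k x)"
  shows "set is \<subseteq> insert k I \<Longrightarrow> x \<in> D \<Longrightarrow>
    wapp (map t is) x = wapp (map t (filter (\<lambda>i. i \<noteq> k) is)) ((t k ^^ length (filter (\<lambda>i. i = k) is)) x)"
proof (induction "is")
  case Nil then show ?case by simp
next
  case (Cons i "is")
  show ?case
  proof (cases "i = k")
    case True
    have inv': "\<forall>i\<in>I. \<forall>x\<in>D. t i x \<in> D" using inv by auto
    have sI: "set (filter (\<lambda>i. i \<noteq> k) is) \<subseteq> I" using Cons.prems by auto
    have xD: "(t k ^^ length (filter (\<lambda>i. i = k) is)) x \<in> D"
      using funpow_inv[of D "t k"] inv Cons.prems by auto
    have "wapp (map t (i # is)) x = t k (wapp (map t is) x)" using True by simp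
    also have "\<dots> = t k (wapp (map t (filter (\<lambda>i. i \<noteq> k) is)) ((t k ^^ length (filter (\<lambda>i. i = k) is)) x))"
      using Cons by simp
    also have "\<dots> = wapp (map t (filter (\<lambda>i. i \<noteq> k) is)) (t k ((t k ^^ length (filter (\<lambda>i. i = k) is)) x))"
      using wapp_comm[OF inv' comm sI xD] .
    finally show ?thesis using True by simp
  next
    case False
    then show ?thesis using Cons by simp
  qed
qed

lemma joint_nil:
  assumes "finite I"
  shows "\<forall>i\<in>I. \<forall>x\<in>D. t i x \<in> D \<Longrightarrow> \<forall>i\<in>I. \<forall>x\<in>D. \<exists>m. (t i ^^ m) x = 0 \<Longrightarrow>
    \<forall>i\<in>I. \<forall>j\<in>I. \<forall>x\<in>D. t i (t j x) = t j (t i x) \<Longrightarrow> \<forall>i\<in>I. t i 0 = 0 \<Longrightarrow>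
    \<forall>x\<in>D. \<exists>m. \<forall>is. length is \<ge> m \<longrightarrow> set is \<subseteq> I \<longrightarrow> wapp (map t is) x = 0"
  using assms
proof (induction I rule: finite_induct)
  case empty
  show ?case by (intro ballI exI[of _ 1]) auto
next
  case (insert k F)
  have IH: "\<forall>x\<in>D. \<exists>m. \<forall>is. length is \<ge> m \<longrightarrow> set is \<subseteq> F \<longrightarrow> wapp (map t is) x = 0"
    apply (rule insert.IH)
    using insert.prems(1) apply blast
    using insert.prems(2) apply blast
    using insert.prems(3) apply blast
    using insert.prems(4) apply blast
    done
  show ?case
  proof
    fix x assume xD: "x \<in> D"
    obtain p where p: "(t k ^^ p) x = 0" using insert.prems(2) xD by blast
    have powD: "(t k ^^ j) x \<in> D" for j using funpow_inv[of D "t k"] insert.prems(1) xD by blast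
    have "\<exists>M. \<forall>j<q. \<forall>is. length is \<ge> M \<longrightarrow> set is \<subseteq> F \<longrightarrow> wapp (map t is) ((t k ^^ j) x) = 0" for q
    proof (induction q)
      case 0 then show ?case by auto
    next
      case (Suc q)
      then obtain M where M: "\<forall>j<q. \<forall>is. length is \<ge> M \<longrightarrow> set is \<subseteq> F \<longrightarrow> wapp (map t is) ((t k ^^ j) x) = 0"
        by blast
      obtain m where m: "\<forall>is. length is \<ge> m \<longrightarrow> set is \<subseteq> F \<longrightarrow> wapp (map t is) ((t k ^^ q) x) = 0"
        using IH powD by blast
      show ?case
      proof (intro exI[of _ "max M m"] allI impI)
        fix j "is" assume "j < Suc q" "max M m \<le> length is" "set is \<subseteq> F"
        then show "wapp (map t is) ((t k ^^ j) x) = 0"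
          using M m by (cases "j = q") auto
      qed
    qed
    then obtain M where M: "\<forall>j<p. \<forall>is. length is \<ge> M \<longrightarrow> set is \<subseteq> F \<longrightarrow> wapp (map t is) ((t k ^^ j) x) = 0"
      by blast
    show "\<exists>m. \<forall>is. length is \<ge> m \<longrightarrow> set is \<subseteq> insert k F \<longrightarrow> wapp (map t is) x = 0"
    proof (intro exI[of _ "p + M"] allI impI)
      fix "is" :: "'a list" assume l: "length is \<ge> p + M" and s: "set is \<subseteq> insert k F"
      define c where "c = length (filter (\<lambda>i. i = k) is)"
      define js where "js = filter (\<lambda>i. i \<noteq> k) is"
      have lsum: "c + length js = length is" unfolding c_def js_def
        using sum_length_filter_compl[of "\<lambda>i. i = k" "is"] by simp
      have sj: "set js \<subseteq> F" using s unfolding js_def by auto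
      have comm: "\<forall>j\<in>F. \<forall>x\<in>D. t k (t j x) = t j (t k x)" using insert.prems(3) by blast
      have e: "wapp (map t is) x = wapp (map t js) ((t k ^^ c) x)"
        unfolding c_def js_def using wapp_rearr[of k F D t, OF insert.prems(1) comm s xD] by blast
      show "wapp (map t is) x = 0"
      proof (cases "c \<ge> p")
        case True
        have "(t k ^^ c) x = (t k ^^ (c - p)) ((t k ^^ p) x)"
          using True by (metis funpow_add le_add_diff_inverse2 o_apply)
        also have "\<dots> = 0" using p funpow_zero[of "t k"] insert.prems(4) by simp
        finally show ?thesis using e wapp_zero2[of F t js] sj insert.prems(4) by simp
      next
        case False
        then have "c < p" by linarith
        moreover have "length js \<ge> M" using l lsum False by linarith
        ultimately have "wapp (map t js) ((t k ^^ c) x) = 0" using M sj by simp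
        then show ?thesis using e by simp
      qed
    qed
  qed
qed



lemma isder_ad: "isder ((\<lambda>i. ad (X i)) ` I)"
  unfolding isder_def ad_def by (auto simp: algebra_simps)

lemma lift_list: "set ds \<subseteq> f ` I \<Longrightarrow> \<exists>is. set is \<subseteq> I \<and> ds = map f is"
proof (induction ds)
  case Nil then show ?case by simp
next
  case (Cons d ds)
  then obtain "is" where "set is \<subseteq> I" "ds = map f is" by auto
  moreover obtain i where "i \<in> I" "d = f i" using Cons.prems by auto
  ultimately show ?case by (intro exI[of _ "i # is"]) auto
qed

lemma gwa_half:
  fixes D :: "'a::ring_1 set" and \<rho> :: "nat \<Rightarrow> 'a \<Rightarrow> 'a" and X Y :: "nat \<Rightarrow> 'a"
  assumes sub: "subring_of D"
  and rinv: "\<forall>i\<in>{1..n}. \<forall>x\<in>D. \<rho> i x \<in> D"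
  and radd: "\<forall>i\<in>{1..n}. \<forall>x\<in>D. \<forall>y\<in>D. \<rho> i (x + y) = \<rho> i x + \<rho> i y"
  and rcomm: "\<forall>i\<in>{1..n}. \<forall>j\<in>{1..n}. \<forall>x\<in>D. \<rho> i (\<rho> j x) = \<rho> j (\<rho> i x)"
  and Xd: "\<forall>i\<in>{1..n}. \<forall>d\<in>D. X i * d = \<rho> i d * X i"
  and XX: "\<forall>i\<in>{1..n}. \<forall>j\<in>{1..n}. X i * X j = X j * X i"
  and XY: "\<forall>i\<in>{1..n}. \<forall>j\<in>{1..n}. i \<noteq> j \<longrightarrow> X i * Y j = Y j * X i"
  and XYD: "\<forall>i\<in>{1..n}. X i * Y i - Y i * X i \<in> D"
  and gen: "gen_ring (D \<union> X ` {1..n} \<union> Y ` {1..n}) = UNIV"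
  and indep: "\<forall>i\<in>{1..n}. \<forall>c\<in>D. \<forall>m. c * X i ^ m = 0 \<longrightarrow> c = 0"
  shows "Delta_locally_nilpotent ((\<lambda>i. ad (X i)) ` {1..n}) \<longleftrightarrow>
     (\<forall>i\<in>{1..n}. locally_nilpotent_on D (\<lambda>d. \<rho> i d - d))"
proof -
  define \<Delta> where "\<Delta> = (\<lambda>i. ad (X i)) ` {1..n}"
  define \<tau> where "\<tau> = (\<lambda>i d. \<rho> i d - d)"
  have der: "isder \<Delta>" unfolding \<Delta>_def by (rule isder_ad)
  have Dsub: "x - y \<in> D" "x + y \<in> D" "x * y \<in> D" if "x \<in> D" "y \<in> D" for x y
    using sub that unfolding subring_of_def by auto
  have D0: "0 \<in> D" using sub unfolding subring_of_def by auto
  have r0: "\<rho> i 0 = 0" if "i \<in> {1..n}" for i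
    using radd that D0 by (metis add_0 add_cancel_right_right)
  have rsub: "\<rho> i (x - y) = \<rho> i x - \<rho> i y" if "i \<in> {1..n}" "x \<in> D" "y \<in> D" for i x y
  proof -
    have "\<rho> i x = \<rho> i ((x - y) + y)" by simp
    also have "\<dots> = \<rho> i (x - y) + \<rho> i y" using radd that Dsub by blast
    finally show ?thesis by (simp add: algebra_simps)
  qed
  have tinv: "\<forall>i\<in>{1..n}. \<forall>x\<in>D. \<tau> i x \<in> D" unfolding \<tau>_def using rinv Dsub by blast
  have t0: "\<forall>i\<in>{1..n}. \<tau> i 0 = 0" unfolding \<tau>_def using r0 by simp
  have tcomm: "\<forall>i\<in>{1..n}. \<forall>j\<in>{1..n}. \<forall>x\<in>D. \<tau> i (\<tau> j x) = \<tau> j (\<tau> i x)"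
  proof (intro ballI)
    fix i j x assume i: "i \<in> {1..n}" and j: "j \<in> {1..n}" and x: "x \<in> D"
    have "\<tau> i (\<tau> j x) = \<rho> i (\<rho> j x) - \<rho> i x - \<rho> j x + x"
      unfolding \<tau>_def using rsub[OF i] rinv j x by (simp add: algebra_simps)
    moreover have "\<tau> j (\<tau> i x) = \<rho> j (\<rho> i x) - \<rho> j x - \<rho> i x + x"
      unfolding \<tau>_def using rsub[OF j] rinv i x by (simp add: algebra_simps)
    moreover have "\<rho> i (\<rho> j x) = \<rho> j (\<rho> i x)" using rcomm i j x by blast
    ultimately show "\<tau> i (\<tau> j x) = \<tau> j (\<tau> i x)" by (simp only:) (simp add: algebra_simps)
  qed
  have key: "ad (X i) (c * P) = \<tau> i c * (X i * P)"
    if i: "i \<in> {1..n}" and c: "c \<in> D" and P: "X i * P = P * X i" for i c P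
  proof -
    have "X i * (c * P) = \<rho> i c * (X i * P)" using Xd i c by (simp add: mult.assoc[symmetric])
    moreover have "c * P * X i = c * (X i * P)" using P by (simp add: mult.assoc)
    ultimately show ?thesis unfolding ad_def \<tau>_def by (simp add: algebra_simps)
  qed
  have repl: "wapp (replicate m (ad (X i))) d = (\<tau> i ^^ m) d * X i ^ m"
    if i: "i \<in> {1..n}" and d: "d \<in> D" for i m d
  proof (induction m)
    case 0 then show ?case by simp
  next
    case (Suc m)
    have "(\<tau> i ^^ m) d \<in> D" using funpow_inv[of D "\<tau> i"] tinv i d by blast
    then show ?case using Suc key[OF i, of "(\<tau> i ^^ m) d" "X i ^ m"]
      by (simp add: power_commutes)
  qed
  have pcomm: "X i * prod_list (map X is) = prod_list (map X is) * X i"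
    if "i \<in> {1..n}" "set is \<subseteq> {1..n}" for i "is"
    using that(2)
  proof (induction "is")
    case Nil then show ?case by simp
  next
    case (Cons j "is")
    then have "X i * X j = X j * X i" using XX that(1) by auto
    then show ?case using Cons by (simp add: mult.assoc[symmetric]) (simp add: mult.assoc)
  qed
  have transfer: "wapp (map (\<lambda>i. ad (X i)) is) d = wapp (map \<tau> is) d * prod_list (map X is)"
    if "set is \<subseteq> {1..n}" "d \<in> D" for "is" d
    using that(1)
  proof (induction "is")
    case Nil then show ?case by simp
  next
    case (Cons i "is")
    have "wapp (map \<tau> is) d \<in> D" using wapp_inv[OF tinv] Cons.prems that(2) by auto
    then show ?case using Cons key[of i "wapp (map \<tau> is) d" "prod_list (map X is)"] pcomm[of i "is"]
      by simp
  qed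
  have DN: "\<exists>m. d \<in> NN \<Delta> m" if ln: "\<forall>i\<in>{1..n}. locally_nilpotent_on D (\<tau> i)" and d: "d \<in> D" for d
  proof -
    have "\<forall>i\<in>{1..n}. \<forall>x\<in>D. \<exists>m. (\<tau> i ^^ m) x = 0"
      using ln unfolding locally_nilpotent_on_def by blast
    then obtain m where m: "\<forall>is. length is \<ge> m \<longrightarrow> set is \<subseteq> {1..n} \<longrightarrow> wapp (map \<tau> is) d = 0"
      using joint_nil[of "{1..n}" D \<tau>, OF _ tinv _ tcomm t0] d by auto
    have "d \<in> NN \<Delta> m" unfolding NN_def
    proof (intro CollectI allI impI)
      fix ds assume l: "length ds = m" and s: "set ds \<subseteq> \<Delta>"
      then obtain "is" where isl: "set is \<subseteq> {1..n}" "ds = map (\<lambda>i. ad (X i)) is"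
        using lift_list unfolding \<Delta>_def by blast
      then have "wapp (map \<tau> is) d = 0" using m l by auto
      then show "wapp ds d = 0" using transfer[OF isl(1) d] isl(2) by simp
    qed
    then show ?thesis by blast
  qed
  show ?thesis
  proof
    assume "Delta_locally_nilpotent ((\<lambda>i. ad (X i)) ` {1..n})"
    then have all: "\<forall>f. \<exists>m. f \<in> NN \<Delta> m" using DLN_iff[OF der] unfolding \<Delta>_def by blast
    show "\<forall>i\<in>{1..n}. locally_nilpotent_on D (\<lambda>d. \<rho> i d - d)"
      unfolding locally_nilpotent_on_def
    proof (intro ballI)
      fix i d assume i: "i \<in> {1..n}" and d: "d \<in> D"
      obtain m where "d \<in> NN \<Delta> m" using all by blast
      moreover have "set (replicate m (ad (X i))) \<subseteq> \<Delta>" unfolding \<Delta>_def using i by auto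
      ultimately have "wapp (replicate m (ad (X i))) d = 0" unfolding NN_def by auto
      then have "(\<tau> i ^^ m) d * X i ^ m = 0" using repl[OF i d] by simp
      moreover have "(\<tau> i ^^ m) d \<in> D" using funpow_inv[of D "\<tau> i"] tinv i d by blast
      ultimately have "(\<tau> i ^^ m) d = 0" using indep i by blast
      then show "\<exists>m. ((\<lambda>d. \<rho> i d - d) ^^ m) d = 0" unfolding \<tau>_def by blast
    qed
  next
    assume "\<forall>i\<in>{1..n}. locally_nilpotent_on D (\<lambda>d. \<rho> i d - d)"
    then have ln: "\<forall>i\<in>{1..n}. locally_nilpotent_on D (\<tau> i)" unfolding \<tau>_def by simp
    have gens: "\<forall>s\<in>D \<union> X ` {1..n} \<union> Y ` {1..n}. \<exists>m. s \<in> NN \<Delta> m"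
    proof
      fix s assume "s \<in> D \<union> X ` {1..n} \<union> Y ` {1..n}"
      then consider "s \<in> D" | j where "j \<in> {1..n}" "s = X j" | j where "j \<in> {1..n}" "s = Y j"
        by blast
      then show "\<exists>m. s \<in> NN \<Delta> m"
      proof cases
        case 1 then show ?thesis using DN ln by blast
      next
        case (2 j)
        have "\<forall>\<delta>\<in>\<Delta>. \<delta> s \<in> NN \<Delta> 0"
        proof
          fix \<delta> assume "\<delta> \<in> \<Delta>"
          then obtain i where i: "i \<in> {1..n}" "\<delta> = ad (X i)" unfolding \<Delta>_def by blast
          then have "\<delta> s = 0" using 2 XX unfolding ad_def by auto
          then show "\<delta> s \<in> NN \<Delta> 0" using NN_0[OF der] by simp
        qed
        then show ?thesis using NN_step by blast
      next
        case (3 j)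
        obtain m where m: "X j * Y j - Y j * X j \<in> NN \<Delta> m" using DN ln XYD 3 by blast
        have "\<forall>\<delta>\<in>\<Delta>. \<delta> s \<in> NN \<Delta> m"
        proof
          fix \<delta> assume "\<delta> \<in> \<Delta>"
          then obtain i where i: "i \<in> {1..n}" "\<delta> = ad (X i)" unfolding \<Delta>_def by blast
          show "\<delta> s \<in> NN \<Delta> m"
          proof (cases "i = j")
            case True then show ?thesis using i 3 m unfolding ad_def by simp
          next
            case False
            then have "\<delta> s = 0" using i 3 XY unfolding ad_def by auto
            then show ?thesis using NN_0[OF der] by simp
          qed
        qed
        then show ?thesis using NN_step by blast
      qed
    qed
    have "\<forall>f. \<exists>m. f \<in> NN \<Delta> m"
      using gen_ring_NN[OF der gens] gen by auto
    then show "Delta_locally_nilpotent ((\<lambda>i. ad (X i)) ` {1..n})"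
      using DLN_iff[OF der] unfolding \<Delta>_def by blast
  qed
qed



lemma plist: "distinct xs \<Longrightarrow> (\<forall>j\<in>set xs. j \<noteq> i \<longrightarrow> f j = (1::'a::monoid_mult)) \<Longrightarrow>
  prod_list (map f xs) = (if i \<in> set xs then f i else 1)"
  by (induction xs) auto

lemma gwa_mono_single:
  assumes "i \<in> {1..n}"
  shows "gwa_mono n X Y (\<lambda>j. if j = i then k else 0) = gwa_mono1 (X i) (Y i) k"
proof -
  have "gwa_mono n X Y (\<lambda>j. if j = i then k else 0) =
     prod_list (map (\<lambda>j. gwa_mono1 (X j) (Y j) (if j = i then k else 0)) [1..<n+1])"
    unfolding gwa_mono_def by simp
  also have "\<dots> = gwa_mono1 (X i) (Y i) k"
    using assms by (subst plist[where i = i]) (auto simp: gwa_mono1_def)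
  finally show ?thesis .
qed

lemma gwa_indep1:
  assumes "is_GWA n D \<sigma> a X Y" "i \<in> {1..n}" "c \<in> D" "c * gwa_mono1 (X i) (Y i) k = 0"
  shows "c = 0"
proof -
  define \<alpha> where "\<alpha> = (\<lambda>j. if j = i then k else 0)"
  have "\<alpha> \<in> gwa_index n" unfolding \<alpha>_def gwa_index_def using assms(2) by auto
  moreover have "(\<Sum>\<beta>\<in>{\<alpha>}. c * gwa_mono n X Y \<beta>) = 0"
    using gwa_mono_single[OF assms(2), of X Y k] assms(4) unfolding \<alpha>_def by simp
  moreover have ind: "\<forall>S c. finite S \<longrightarrow> S \<subseteq> gwa_index n \<longrightarrow> (\<forall>\<alpha>\<in>S. c \<alpha> \<in> D) \<longrightarrow>
        (\<Sum>\<alpha>\<in>S. c \<alpha> * gwa_mono n X Y \<alpha>) = 0 \<longrightarrow> (\<forall>\<alpha>\<in>S. c \<alpha> = 0)"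
    using assms(1) unfolding is_GWA_def by (elim conjE) assumption
  ultimately show ?thesis using ind[rule_format, of "{\<alpha>}" "\<lambda>_. c"] assms(3) by simp
qed

theorem lemma2p3:
  fixes D :: "'a::ring_1 set" and \<sigma> :: "nat \<Rightarrow> 'a \<Rightarrow> 'a"
    and a X Y :: "nat \<Rightarrow> 'a" and n :: nat
  assumes "is_GWA n D \<sigma> a X Y"
  shows "(Delta_locally_nilpotent ((\<lambda>i. ad (X i)) ` {1..n}) \<longleftrightarrow>
            (\<forall>i\<in>{1..n}. locally_nilpotent_on D (\<lambda>d. \<sigma> i d - d)))
       \<and> (Delta_locally_nilpotent ((\<lambda>i. ad (Y i)) ` {1..n}) \<longleftrightarrow>
            (\<forall>i\<in>{1..n}. locally_nilpotent_on D (\<lambda>d. inv_into D (\<sigma> i) d - d)))"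
proof -
  note G = assms[unfolded is_GWA_def]
  have sub: "subring_of D"
    using G by (elim conjE) assumption
  have aut: "\<forall>i\<in>{1..n}. ring_automorphism_on D (\<sigma> i)"
    using G by (elim conjE) assumption
  have scomm: "\<forall>i\<in>{1..n}. \<forall>j\<in>{1..n}. \<forall>x\<in>D. \<sigma> i (\<sigma> j x) = \<sigma> j (\<sigma> i x)"
    using G by (elim conjE) assumption
  have aD0: "\<forall>i\<in>{1..n}. a i \<in> D \<and> (\<forall>d\<in>D. a i * d = d * a i)"
    using G by (elim conjE) assumption
  have YX: "\<forall>i\<in>{1..n}. Y i * X i = a i \<and> X i * Y i = \<sigma> i (a i)"
    using G by (elim conjE) assumption
  have XYd: "\<forall>i\<in>{1..n}. \<forall>d\<in>D. X i * d = \<sigma> i d * X i \<and> Y i * d = inv_into D (\<sigma> i) d * Y i"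
    using G by (elim conjE) assumption
  have comms: "\<forall>i\<in>{1..n}. \<forall>j\<in>{1..n}. i \<noteq> j \<longrightarrow>
        X i * X j = X j * X i \<and> X i * Y j = Y j * X i \<and> Y i * Y j = Y j * Y i"
    using G by (elim conjE) assumption
  have gen: "gen_ring (D \<union> X ` {1..n} \<union> Y ` {1..n}) = UNIV"
    using G by (elim conjE) assumption
  have aD: "\<forall>i\<in>{1..n}. a i \<in> D" using aD0 by simp
  have Xd: "\<forall>i\<in>{1..n}. \<forall>d\<in>D. X i * d = \<sigma> i d * X i" using XYd by simp
  have Yd: "\<forall>i\<in>{1..n}. \<forall>d\<in>D. Y i * d = inv_into D (\<sigma> i) d * Y i" using XYd by simp
  have bij: "bij_betw (\<sigma> i) D D" if "i \<in> {1..n}" for i using aut that unfolding ring_automorphism_on_def by blast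
  have sadd: "\<forall>i\<in>{1..n}. \<forall>x\<in>D. \<forall>y\<in>D. \<sigma> i (x + y) = \<sigma> i x + \<sigma> i y"
    using aut unfolding ring_automorphism_on_def by blast
  have sinv: "\<forall>i\<in>{1..n}. \<forall>x\<in>D. \<sigma> i x \<in> D" using bij bij_betwE by blast
  have XX: "X i * X j = X j * X i" and YY: "Y i * Y j = Y j * Y i"
    if "i \<in> {1..n}" "j \<in> {1..n}" for i j
    using comms that by (cases "i = j"; simp)+
  have Dsub: "x - y \<in> D" if "x \<in> D" "y \<in> D" for x y
    using sub that unfolding subring_of_def by auto
  have Dadd: "x + y \<in> D" if "x \<in> D" "y \<in> D" for x y
    using sub that unfolding subring_of_def by auto
  have part1: "Delta_locally_nilpotent ((\<lambda>i. ad (X i)) ` {1..n}) \<longleftrightarrow>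
            (\<forall>i\<in>{1..n}. locally_nilpotent_on D (\<lambda>d. \<sigma> i d - d))"
  proof (rule gwa_half[OF sub sinv sadd scomm Xd _ _ _ gen])
    show "\<forall>i\<in>{1..n}. \<forall>j\<in>{1..n}. X i * X j = X j * X i" using XX by blast
    show "\<forall>i\<in>{1..n}. \<forall>j\<in>{1..n}. i \<noteq> j \<longrightarrow> X i * Y j = Y j * X i" using comms by blast
    show "\<forall>i\<in>{1..n}. X i * Y i - Y i * X i \<in> D" using YX aD sinv Dsub by simp
    show "\<forall>i\<in>{1..n}. \<forall>c\<in>D. \<forall>m. c * X i ^ m = 0 \<longrightarrow> c = 0"
    proof (intro ballI allI impI)
      fix i c m assume "i \<in> {1..n}" "c \<in> D" "c * X i ^ m = 0"
      then show "c = 0" using gwa_indep1[OF assms, of i c "int m"] by (simp add: gwa_mono1_def)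
    qed
  qed
  define \<rho> where "\<rho> = (\<lambda>i. inv_into D (\<sigma> i))"
  have rinv: "\<forall>i\<in>{1..n}. \<forall>x\<in>D. \<rho> i x \<in> D"
    unfolding \<rho>_def using bij by (simp add: bij_betw_def inv_into_into)
  have sr: "\<sigma> i (\<rho> i x) = x" if "i \<in> {1..n}" "x \<in> D" for i x
    unfolding \<rho>_def using bij[OF that(1)] that(2) by (simp add: bij_betw_def f_inv_into_f)
  have rs: "\<rho> i (\<sigma> i x) = x" if "i \<in> {1..n}" "x \<in> D" for i x
    unfolding \<rho>_def using bij[OF that(1)] that(2) by (simp add: bij_betw_def inv_into_f_f)
  have sinj: "x = y" if "i \<in> {1..n}" "x \<in> D" "y \<in> D" "\<sigma> i x = \<sigma> i y" for i x y
    using rs that by metis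
  have radd: "\<forall>i\<in>{1..n}. \<forall>x\<in>D. \<forall>y\<in>D. \<rho> i (x + y) = \<rho> i x + \<rho> i y"
  proof (intro ballI)
    fix i x y assume i: "i \<in> {1..n}" and x: "x \<in> D" and y: "y \<in> D"
    have "\<sigma> i (\<rho> i x + \<rho> i y) = x + y" using sadd i rinv x y sr by simp
    then have "\<rho> i (x + y) = \<rho> i (\<sigma> i (\<rho> i x + \<rho> i y))" by simp
    also have "\<dots> = \<rho> i x + \<rho> i y" using rs i rinv x y Dadd by simp
    finally show "\<rho> i (x + y) = \<rho> i x + \<rho> i y" .
  qed
  have rcomm: "\<forall>i\<in>{1..n}. \<forall>j\<in>{1..n}. \<forall>x\<in>D. \<rho> i (\<rho> j x) = \<rho> j (\<rho> i x)"
  proof (intro ballI)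
    fix i j x assume i: "i \<in> {1..n}" and j: "j \<in> {1..n}" and x: "x \<in> D"
    define u where "u = \<rho> i (\<rho> j x)"
    define w where "w = \<rho> j (\<rho> i x)"
    have uD: "u \<in> D" and wD: "w \<in> D" unfolding u_def w_def using rinv i j x by auto
    have "\<sigma> j (\<sigma> i u) = x" unfolding u_def using sr i j x rinv by simp
    moreover have "\<sigma> i (\<sigma> j u) = \<sigma> j (\<sigma> i u)" using scomm i j uD by blast
    ultimately have "\<sigma> i (\<sigma> j u) = x" by simp
    moreover have "\<sigma> i (\<sigma> j w) = x" unfolding w_def using sr i j x rinv by simp
    ultimately have "\<sigma> i (\<sigma> j u) = \<sigma> i (\<sigma> j w)" by simp
    then have "\<sigma> j u = \<sigma> j w" using sinj[OF i] sinv j uD wD by blast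
    then show "\<rho> i (\<rho> j x) = \<rho> j (\<rho> i x)" using sinj[OF j] uD wD unfolding u_def w_def by blast
  qed
  have part2: "Delta_locally_nilpotent ((\<lambda>i. ad (Y i)) ` {1..n}) \<longleftrightarrow>
            (\<forall>i\<in>{1..n}. locally_nilpotent_on D (\<lambda>d. \<rho> i d - d))"
  proof (rule gwa_half[OF sub rinv radd rcomm])
    show "\<forall>i\<in>{1..n}. \<forall>d\<in>D. Y i * d = \<rho> i d * Y i" using Yd unfolding \<rho>_def by blast
    show "\<forall>i\<in>{1..n}. \<forall>j\<in>{1..n}. Y i * Y j = Y j * Y i" using YY by blast
    show "\<forall>i\<in>{1..n}. \<forall>j\<in>{1..n}. i \<noteq> j \<longrightarrow> Y i * X j = X j * Y i"
    proof (intro ballI impI)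
      fix i j assume "i \<in> {1..n}" "j \<in> {1..n}" "i \<noteq> j"
      then show "Y i * X j = X j * Y i" using comms by (metis (no_types))
    qed
    show "\<forall>i\<in>{1..n}. Y i * X i - X i * Y i \<in> D" using YX aD sinv Dsub by simp
    show "gen_ring (D \<union> Y ` {1..n} \<union> X ` {1..n}) = UNIV" using gen by (simp add: Un_ac)
    show "\<forall>i\<in>{1..n}. \<forall>c\<in>D. \<forall>m. c * Y i ^ m = 0 \<longrightarrow> c = 0"
    proof (intro ballI allI impI)
      fix i c m assume "i \<in> {1..n}" "c \<in> D" "c * Y i ^ m = 0"
      then show "c = 0" using gwa_indep1[OF assms, of i c "- int m"] by (cases "m = 0") (auto simp: gwa_mono1_def)
    qed
  qed
  show ?thesis using part1 part2 unfolding \<rho>_def by simp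
qed

end
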